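(* Let $h\in[0:H-1]$, let $\mathbf{A}\in\{-1,1\}^{(d/2)\times d}$, and let $\widetilde{\mathbf{A}}_h$ be a submatrix of $\mathbf{A}$ consisting of $d/2-s_{\le h}$ of its rows. Suppose $|\mathcal{N}(\mathsf{O}^{\mathbf{M}_\mathbf{A}}(\widetilde{\mathbf{A}}_h),\alpha_h)|\ge 2^{s_h/\log d}$. Then there exist $s_{h+1}$ rows $\mathbf{R}_h$ of $\widetilde{\mathbf{A}}_h$ such that the matrix $\widetilde{\mathbf{A}}_{h+1}=\widetilde{\mathbf{A}}_h\setminus\mathbf{R}_h$ obtained by deleting them satisfies $$\big|\mathsf{O}^{\mathbf{M}_\mathbf{A}}(\widetilde{\mathbf{A}}_{h+1})\cap\mathcal{N}(\mathsf{O}^{\mathbf{M}_\mathbf{A}}(\widetilde{\mathbf{A}}_h),\alpha_h)\big|\ge 2^{s_h/(2\log d)}.$$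
   Context: Setting: $d$ large, $\delta\in(0,1)$, $k=d^{1-\delta-o(1)}$, $s=d^{1-\delta/2}\log^2 d$, $\xi=2\exp(-\log^5 d)$, $\xi'=\sqrt d\xi$, $n\le d\exp(-\log d/\log\log d)$, $\Delta=d/n$. A fixed deterministic $(k,n)$-protocol: on $\mathbf{A}$ Alice sends $\mathbf{M}_\mathbf{A}\in\{0,1\}^{kd}$; Bob's output is a unit vector $\mathbf{x}_{\mathbf{M},\mathbf{v},\mathbf{R}}$ defined for every $\mathbf{M}\in\{0,1\}^{kd}$, $\mathbf{v}\in\frac1{\sqrt d}\{-1,1\}^d$, $\mathbf{R}\in(\{-1,1\}^d\cup\{\mathsf{nil}\})^n$. A fixed set $V^*\subseteq\frac1{\sqrt d}\{-1,1\}^d$. For a matrix $\mathbf{B}$ with rows in $\{-1,1\}^d$: $\mathsf{T}^{\mathbf{M}}(\mathbf{B})=\{\mathbf{x}_{\mathbf{M},\mathbf{v},\mathbf{R}}:\mathbf{v}\in V^*,\ \text{each entry of }\mathbf{R}\text{ is }\mathsf{nil}\text{ or a row of }\mathbf{B}\}$ and $\mathsf{O}^{\mathbf{M}}(\mathbf{B})=\{\mathbf{x}\in\mathsf{T}^{\mathbf{M}}(\mathbf{B}):\|\mathbf{B}\mathbf{x}\|_\infty\le\xi'\}$. $\mathcal{N}(X,\alpha)$: a largest subset of $X$ with pairwise Euclidean distances at least $\alpha$. Parameters: $H$ is the smallest integer with $\frac{s}{\log^2 d}(\frac{\Delta}{\log^5 d})^H\ge d/10$; $s_h=\frac{s}{\log^2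 d}(\frac{\Delta}{\log^5 d})^h$ for $h\in[0:H-1]$ and $s_H=d/10$; $s_{\le h}=\sum_{i=1}^h s_i$, $s_{\le0}=0$; $\alpha_0=d^{-8}$, $\alpha_h=\alpha_{h-1}^8$. *)

theory Defs
  imports "HOL-Analysis.Analysis"
begin

definition lg :: "real \<Rightarrow> real" where "lg x = log 2 x"

text \<open>Vectors in R^d are functions nat => real vanishing outside {..<d}.\<close>
definition vecs :: "nat \<Rightarrow> (nat \<Rightarrow> real) set" where
  "vecs d = {x. \<forall>j\<ge>d. x j = 0}"

definition dotd :: "nat \<Rightarrow> (nat \<Rightarrow> real) \<Rightarrow> (nat \<Rightarrow> real) \<Rightarrow> real" where
  "dotd d x y = (\<Sum>j<d. x j * y j)"

definition normd :: "nat \<Rightarrow> (nat \<Rightarrow> real) \<Rightarrow> real" where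
  "normd d x = sqrt (dotd d x x)"

definition distd :: "nat \<Rightarrow> (nat \<Rightarrow> real) \<Rightarrow> (nat \<Rightarrow> real) \<Rightarrow> real" where
  "distd d x y = normd d (\<lambda>j. x j - y j)"

definition signvecs :: "nat \<Rightarrow> (nat \<Rightarrow> real) set" where
  "signvecs d = {x. (\<forall>j<d. x j = 1 \<or> x j = -1) \<and> (\<forall>j\<ge>d. x j = 0)}"

definition scaled_signvecs :: "nat \<Rightarrow> (nat \<Rightarrow> real) set" where
  "scaled_signvecs d = {x. (\<forall>j<d. x j = 1 / sqrt d \<or> x j = - 1 / sqrt d) \<and> (\<forall>j\<ge>d. x j = 0)}"

text \<open>Matrices in {-1,1}^((d/2) x d): row i (for i < d div 2) is A i.\<close>
definition sign_mats :: "nat \<Rightarrow> (nat \<Rightarrow> nat \<Rightarrow> real) set" where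
  "sign_mats d = {A. (\<forall>i<d div 2. A i \<in> signvecs d) \<and> (\<forall>i\<ge>d div 2. A i = (\<lambda>_. 0))}"

text \<open>A deterministic (k,n)-protocol: Alice maps A to a message in {0,1}^(kd);
  Bob's output (for every message M, every v, every R in ({-1,1}^d + nil)^n,
  nil being None) is a unit vector in R^d.\<close>
definition protocol ::
  "nat \<Rightarrow> nat \<Rightarrow> nat \<Rightarrow> ((nat \<Rightarrow> nat \<Rightarrow> real) \<Rightarrow> bool list)
     \<Rightarrow> (bool list \<Rightarrow> (nat \<Rightarrow> real) \<Rightarrow> (nat \<Rightarrow> real) option list \<Rightarrow> (nat \<Rightarrow> real)) \<Rightarrow> bool" where
  "protocol d k n msg out \<longleftrightarrow>
     (\<forall>A. length (msg A) = k * d) \<and>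
     (\<forall>M v R. length M = k * d \<longrightarrow> v \<in> scaled_signvecs d \<longrightarrow> length R = n \<longrightarrow>
        (\<forall>r\<in>set R. r = None \<or> (\<exists>b\<in>signvecs d. r = Some b)) \<longrightarrow>
        out M v R \<in> vecs d \<and> normd d (out M v R) = 1)"

text \<open>T^M(B) and O^M(B), where B is given by its set of Bs.\<close>
definition Tset ::
  "nat \<Rightarrow> (bool list \<Rightarrow> (nat \<Rightarrow> real) \<Rightarrow> (nat \<Rightarrow> real) option list \<Rightarrow> (nat \<Rightarrow> real))
     \<Rightarrow> (nat \<Rightarrow> real) set \<Rightarrow> bool list \<Rightarrow> (nat \<Rightarrow> real) set \<Rightarrow> (nat \<Rightarrow> real) set" where
  "Tset n out Vs M Bs = {out M v R | v R. v \<in> Vs \<and> length R = n \<and>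
       (\<forall>r\<in>set R. r = None \<or> (\<exists>b\<in>Bs. r = Some b))}"

definition Oset ::
  "nat \<Rightarrow> nat \<Rightarrow> real \<Rightarrow> (bool list \<Rightarrow> (nat \<Rightarrow> real) \<Rightarrow> (nat \<Rightarrow> real) option list \<Rightarrow> (nat \<Rightarrow> real))
     \<Rightarrow> (nat \<Rightarrow> real) set \<Rightarrow> bool list \<Rightarrow> (nat \<Rightarrow> real) set \<Rightarrow> (nat \<Rightarrow> real) set" where
  "Oset d n xi' out Vs M Bs = {x \<in> Tset n out Vs M Bs. \<forall>b\<in>Bs. \<bar>dotd d b x\<bar> \<le> xi'}"

definition separated :: "nat \<Rightarrow> (nat \<Rightarrow> real) set \<Rightarrow> real \<Rightarrow> (nat \<Rightarrow> real) set \<Rightarrow> bool" where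
  "separated d X \<alpha> S \<longleftrightarrow> S \<subseteq> X \<and> (\<forall>x\<in>S. \<forall>y\<in>S. x \<noteq> y \<longrightarrow> distd d x y \<ge> \<alpha>)"

definition largest_net :: "nat \<Rightarrow> (nat \<Rightarrow> real) set \<Rightarrow> real \<Rightarrow> (nat \<Rightarrow> real) set \<Rightarrow> bool" where
  "largest_net d X \<alpha> N \<longleftrightarrow> separated d X \<alpha> N \<and> finite N \<and>
     (\<forall>S. separated d X \<alpha> S \<and> finite S \<longrightarrow> card S \<le> card N)"

definition xi :: "nat \<Rightarrow> real" where "xi d = 2 * exp (- (lg d ^ 5))"
definition xi' :: "nat \<Rightarrow> real" where "xi' d = sqrt d * xi d"
definition spar :: "real \<Rightarrow> nat \<Rightarrow> real" where "spar \<delta> d = d powr (1 - \<delta> / 2) * lg d ^ 2"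
definition Delta :: "nat \<Rightarrow> nat \<Rightarrow> real" where "Delta d n = real d / real n"

definition Hpar :: "real \<Rightarrow> nat \<Rightarrow> nat \<Rightarrow> nat" where
  "Hpar \<delta> d n = (LEAST H. spar \<delta> d / lg d ^ 2 * (Delta d n / lg d ^ 5) ^ H \<ge> real d / 10)"

definition sh :: "real \<Rightarrow> nat \<Rightarrow> nat \<Rightarrow> nat \<Rightarrow> real" where
  "sh \<delta> d n h = (if h < Hpar \<delta> d n then spar \<delta> d / lg d ^ 2 * (Delta d n / lg d ^ 5) ^ h
                  else real d / 10)"

text \<open>Number of Bs deleted in the first h rounds (integer rounding: ceil of each s_i).\<close>
definition sle_nat :: "real \<Rightarrow> nat \<Rightarrow> nat \<Rightarrow> nat \<Rightarrow> nat" where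
  "sle_nat \<delta> d n h = (\<Sum>i\<in>{1..h}. nat \<lceil>sh \<delta> d n i\<rceil>)"

fun alpha :: "nat \<Rightarrow> nat \<Rightarrow> real" where
  "alpha d 0 = real d powr (-8)"
| "alpha d (Suc h) = alpha d h ^ 8"

end

theory Submission
  imports Defs "HOL-Real_Asymp.Real_Asymp"
begin


lemma choose_step_nat:
  fixes b k :: nat
  shows "Suc k * (b choose Suc k) = (b - k) * (b choose k)"
  by (metis binomial_absorb_comp binomial_absorption)

lemma choose_ratio:
  fixes a n M :: nat
  assumes "M + n \<le> a" "M < a"
  shows "m \<le> M \<Longrightarrow> real ((a - n) choose m) \<ge> real (a choose m) * (1 - real n / (real a - real M)) ^ m"
proof (induction m)
  case 0
  then show ?case by simp
next
  case (Suc m)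
  define q where "q = 1 - real n / (real a - real M)"
  have aM: "real a - real M > 0" using assms by simp
  have q0: "q \<ge> 0" unfolding q_def using assms aM by (simp add: field_simps)
  have IH: "real ((a - n) choose m) \<ge> real (a choose m) * q ^ m" using Suc q_def by simp
  have e1: "real (Suc m) * real ((a - n) choose Suc m) = (real (a - n) - real m) * real ((a - n) choose m)"
  proof -
    have "m \<le> a - n" using Suc.prems assms by linarith
    then have "real (Suc m * ((a - n) choose Suc m)) = real ((a - n - m) * ((a - n) choose m))"
      using choose_step_nat[of m "a - n"] by presburger
    then show ?thesis using \<open>m \<le> a - n\<close> by (simp only: of_nat_mult of_nat_diff)
  qed
  have e2: "real (Suc m) * real (a choose Suc m) = (real a - real m) * real (a choose m)"
  proof -
    have "m \<le> a" using Suc.prems assms by linarith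
    then have "real (Suc m * (a choose Suc m)) = real ((a - m) * (a choose m))"
      using choose_step_nat[of m a] by presburger
    then show ?thesis using \<open>m \<le> a\<close> by (simp only: of_nat_mult of_nat_diff)
  qed
  have am: "real a - real m > 0" using Suc.prems assms by simp
  have key: "real (a - n) - real m \<ge> q * (real a - real m)"
  proof -
    have "q * (real a - real m) = real a - real m - real n * (real a - real m) / (real a - real M)"
      unfolding q_def by (simp add: algebra_simps)
    also have "real n * (real a - real m) / (real a - real M) \<ge> real n"
    proof -
      have "real a - real m \<ge> real a - real M" using Suc.prems by simp
      then have "real n * (real a - real M) \<le> real n * (real a - real m)" by (rule mult_left_mono) simp
      then show ?thesis using aM by (simp add: le_divide_eq)
    qed
    ultimately show ?thesis using assms by (simp add: of_nat_diff)
  qed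
  have "real (Suc m) * real ((a - n) choose Suc m) \<ge> q * (real a - real m) * (real (a choose m) * q ^ m)"
    unfolding e1 using IH key q0 am Suc.prems assms
    by (intro mult_mono) auto
  also have "q * (real a - real m) * (real (a choose m) * q ^ m) = real (Suc m) * (real (a choose Suc m) * q ^ Suc m)"
  proof -
    have "q * (real a - real m) * (real (a choose m) * q ^ m) = q ^ Suc m * ((real a - real m) * real (a choose m))"
      by (simp add: algebra_simps)
    also have "\<dots> = q ^ Suc m * (real (Suc m) * real (a choose Suc m))" using e2 by simp
    finally show ?thesis by (simp only: ac_simps)
  qed
  finally show ?case unfolding q_def[symmetric]
    by (simp only: mult_le_cancel_left_pos)
qed

lemma exists_good_subset:
  fixes I :: "'a set" and N :: "'b set" and U :: "'b \<Rightarrow> 'a set"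
  assumes fI: "finite I" and fN: "finite N" and U: "\<forall>x\<in>N. U x \<subseteq> I \<and> card (U x) \<le> n"
    and m: "m \<le> card I"
  shows "\<exists>R. R \<subseteq> I \<and> card R = m \<and>
     card N * ((card I - n) choose m) \<le> card {x\<in>N. R \<inter> U x = {}} * (card I choose m)"
proof (rule ccontr)
  assume neg: "\<not> ?thesis"
  define S where "S = {R. R \<subseteq> I \<and> card R = m}"
  have fS: "finite S" unfolding S_def using fI by (simp add: finite_subset[of _ "Pow I"] Pow_def)
  have cS: "card S = card I choose m" unfolding S_def using n_subsets[OF fI] .
  have cpos: "card I choose m > 0" using m by simp
  have Sne: "S \<noteq> {}" using cS cpos by auto
  let ?t = "card N * ((card I - n) choose m)"
  let ?f = "\<lambda>R. card {x\<in>N. R \<inter> U x = {}}"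
  have lt: "\<forall>R\<in>S. ?f R * (card I choose m) < ?t" using neg unfolding S_def by auto
  have "(\<Sum>R\<in>S. ?f R * (card I choose m)) < (\<Sum>R\<in>S. ?t)"
    by (rule sum_strict_mono[OF fS Sne]) (use lt in auto)
  hence A: "(\<Sum>R\<in>S. ?f R) * (card I choose m) < (card I choose m) * ?t"
    by (simp add: sum_distrib_right cS)
  have "(\<Sum>R\<in>S. ?f R) = (\<Sum>R\<in>S. \<Sum>x\<in>{x\<in>N. R \<inter> U x = {}}. (1::nat))" by simp
  also have "\<dots> = (\<Sum>x\<in>N. \<Sum>R | R \<in> S \<and> R \<inter> U x = {}. (1::nat))"
    by (rule sum.swap_restrict[OF fS fN])
  also have "\<dots> = (\<Sum>x\<in>N. card (I - U x) choose m)"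
  proof (rule sum.cong[OF refl])
    fix x assume "x \<in> N"
    have "{R. R \<in> S \<and> R \<inter> U x = {}} = {R. R \<subseteq> I - U x \<and> card R = m}"
      unfolding S_def by auto
    then show "(\<Sum>R | R \<in> S \<and> R \<inter> U x = {}. (1::nat)) = card (I - U x) choose m"
      using n_subsets[of "I - U x" m] fI by simp
  qed
  also have "\<dots> \<ge> (\<Sum>x\<in>N. (card I - n) choose m)"
  proof (rule sum_mono)
    fix x assume "x \<in> N"
    then have "U x \<subseteq> I" using U by auto
    then have "card (I - U x) = card I - card (U x)" using fI by (simp add: card_Diff_subset finite_subset)
    then have "card (I - U x) \<ge> card I - n" using U \<open>x\<in>N\<close> by auto
    then show "(card I - n) choose m \<le> card (I - U x) choose m" by (rule binomial_right_mono)
  qed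
  finally have "?t \<le> (\<Sum>R\<in>S. ?f R)" by simp
  hence "(card I choose m) * ?t \<le> (\<Sum>R\<in>S. ?f R) * (card I choose m)" by simp
  with A show False by simp
qed


lemma survive:
  assumes x: "x \<in> Oset d n t out Vs M (A ` I)"
  shows "\<exists>U. U \<subseteq> I \<and> card U \<le> n \<and> (\<forall>R. R \<inter> U = {} \<longrightarrow> x \<in> Oset d n t out Vs M (A ` (I - R)))"
proof -
  from x obtain v Rl where xe: "x = out M v Rl" and v: "v \<in> Vs" and len: "length Rl = n"
    and Rl: "\<forall>r\<in>set Rl. r = None \<or> (\<exists>b\<in>A ` I. r = Some b)"
    and dots: "\<forall>b\<in>A ` I. \<bar>dotd d b x\<bar> \<le> t"
    unfolding Oset_def Tset_def by blast
  define f where "f r = (SOME i. i \<in> I \<and> r = Some (A i))" for r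
  define U where "U = f ` {r\<in>set Rl. r \<noteq> None}"
  have fr: "f r \<in> I \<and> r = Some (A (f r))" if "r \<in> set Rl" "r \<noteq> None" for r
  proof -
    have "\<exists>i. i \<in> I \<and> r = Some (A i)" using Rl that by auto
    then show ?thesis unfolding f_def by (rule someI_ex)
  qed
  have UI: "U \<subseteq> I" unfolding U_def using fr by auto
  have "card U \<le> card {r\<in>set Rl. r \<noteq> None}" unfolding U_def by (rule card_image_le) simp
  also have "\<dots> \<le> card (set Rl)" by (rule card_mono) auto
  also have "\<dots> \<le> n" using len card_length by auto
  finally have cU: "card U \<le> n" .
  have "x \<in> Oset d n t out Vs M (A ` (I - R))" if R: "R \<inter> U = {}" for R
  proof -
    have "\<forall>r\<in>set Rl. r = None \<or> (\<exists>b\<in>A ` (I - R). r = Some b)"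
    proof
      fix r assume r: "r \<in> set Rl"
      show "r = None \<or> (\<exists>b\<in>A ` (I - R). r = Some b)"
      proof (cases "r = None")
        case False
        then have "f r \<in> I" "r = Some (A (f r))" using fr r by auto
        moreover have "f r \<notin> R" using R r False unfolding U_def by auto
        ultimately show ?thesis by blast
      qed simp
    qed
    then have "x \<in> Tset n out Vs M (A ` (I - R))" unfolding Tset_def using xe v len by blast
    moreover have "\<forall>b\<in>A ` (I - R). \<bar>dotd d b x\<bar> \<le> t" using dots by auto
    ultimately show ?thesis unfolding Oset_def by blast
  qed
  then show ?thesis using UI cU by blast
qed

lemma geom_le:
  fixes r :: real assumes "r \<ge> 2"
  shows "(\<Sum>i\<le>h. r ^ i) \<le> 2 * r ^ h"
proof (induction h)
  case 0 then show ?case by simp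
next
  case (Suc h)
  have "r ^ h \<le> r ^ Suc h" using assms by (simp add: power_increasing)
  moreover have "2 * r ^ h \<le> r * r ^ h" using assms by (intro mult_right_mono) auto
  ultimately show ?case using Suc by simp
qed

lemma nat_ceil_le: "y \<ge> 0 \<Longrightarrow> real (nat \<lceil>y\<rceil>) \<le> y + 1"
proof -
  assume "y \<ge> 0"
  then have "\<lceil>y\<rceil> \<ge> 0" by simp
  then have "real (nat \<lceil>y\<rceil>) = of_int \<lceil>y\<rceil>" by simp
  also have "\<dots> \<le> y + 1" by (rule of_int_ceiling_le_add_one)
  finally show ?thesis .
qed

lemma asym:
  "eventually (\<lambda>d::nat. exp (lg d / lg (lg d)) \<ge> 2 * (lg d)^5 \<and> exp (- lg d / lg (lg d)) \<le> 1/100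
      \<and> sqrt d \<ge> 6 * lg d \<and> d \<ge> 100) sequentially"
proof -
  have "eventually (\<lambda>x::real. exp (log 2 x / log 2 (log 2 x)) \<ge> 2 * (log 2 x)^5 \<and>
      exp (- log 2 x / log 2 (log 2 x)) \<le> 1/100 \<and> sqrt x \<ge> 6 * log 2 x \<and> x \<ge> 100) at_top"
    by (intro eventually_conj; real_asymp)
  from filterlim_iff[THEN iffD1, OF filterlim_real_sequentially, rule_format, OF this]
  show ?thesis unfolding lg_def by simp
qed



theorem lemma5p6:
  fixes \<delta> :: real and k :: "nat \<Rightarrow> nat"
  assumes "0 < \<delta>" and "\<delta> < 1"
    and "eventually (\<lambda>d. k d > 0) sequentially"
    and "((\<lambda>d. ln (real (k d)) / ln (real d)) \<longlongrightarrow> 1 - \<delta>) sequentially"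
  shows "\<exists>D. \<forall>d\<ge>D. even d \<longrightarrow>
    (\<forall>n msg out Vs A h I N.
       1 \<le> n \<and> real n \<le> real d * exp (- lg d / lg (lg d)) \<and>
       protocol d (k d) n msg out \<and>
       Vs \<subseteq> scaled_signvecs d \<and>
       A \<in> sign_mats d \<and>
       h < Hpar \<delta> d n \<and>
       I \<subseteq> {..<d div 2} \<and> card I = d div 2 - sle_nat \<delta> d n h \<and>
       largest_net d (Oset d n (xi' d) out Vs (msg A) (A ` I)) (alpha d h) N \<and>
       real (card N) \<ge> 2 powr (sh \<delta> d n h / lg d)
     \<longrightarrow> (\<exists>R. R \<subseteq> I \<and> card R = nat \<lceil>sh \<delta> d n (Suc h)\<rceil> \<and>
            real (card (Oset d n (xi' d) out Vs (msg A) (A ` (I - R)) \<inter> N))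
              \<ge> 2 powr (sh \<delta> d n h / (2 * lg d))))"
  proof -
  from asym[unfolded eventually_sequentially] obtain D where D0: "\<forall>d\<ge>(D::nat). exp (lg d / lg (lg d)) \<ge> 2 * (lg d)^5 \<and> exp (- lg d / lg (lg d)) \<le> 1/100
      \<and> sqrt d \<ge> 6 * lg d \<and> real d \<ge> 100" ..
  have D: "exp (lg d / lg (lg d)) \<ge> 2 * (lg d)^5 \<and> exp (- lg d / lg (lg d)) \<le> 1/100
      \<and> sqrt d \<ge> 6 * lg d \<and> real d \<ge> 100" if "d \<ge> D" for d :: nat using D0 that by simp
  show ?thesis
  proof (rule exI[of _ D], intro allI impI)
    fix d :: nat and n msg out Vs A h I N
    assume dD: "D \<le> d" and ev: "even d"
    assume hyp: "1 \<le> n \<and> real n \<le> real d * exp (- lg d / lg (lg d)) \<and>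
       protocol d (k d) n msg out \<and>
       Vs \<subseteq> scaled_signvecs d \<and>
       A \<in> sign_mats d \<and>
       h < Hpar \<delta> d n \<and>
       I \<subseteq> {..<d div 2} \<and> card I = d div 2 - sle_nat \<delta> d n h \<and>
       largest_net d (Oset d n (xi' d) out Vs (msg A) (A ` I)) (alpha d h) N \<and>
       real (card N) \<ge> 2 powr (sh \<delta> d n h / lg d)"
    define L where "L = lg d"
    from D[OF dD] have P1: "exp (L / lg L) \<ge> 2 * L^5" and P2: "exp (- L / lg L) \<le> 1/100"
      and P3: "sqrt d \<ge> 6 * L" and P4: "real d \<ge> 100" unfolding L_def by auto
    from hyp have n1: "1 \<le> n" and nle: "real n \<le> real d * exp (- L / lg L)"
      and hH: "h < Hpar \<delta> d n" and Isub: "I \<subseteq> {..<d div 2}"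
      and cI: "card I = d div 2 - sle_nat \<delta> d n h"
      and net: "largest_net d (Oset d n (xi' d) out Vs (msg A) (A ` I)) (alpha d h) N"
      and cN: "real (card N) \<ge> 2 powr (sh \<delta> d n h / L)"
      unfolding L_def by auto
    have L4: "L \<ge> 4"
    proof -
      have "(2::real) powr 4 \<le> real d" using P4 by simp
      then show ?thesis unfolding L_def lg_def using P4 by (subst le_log_iff) auto
    qed
    have dpos: "real d > 0" using P4 by simp
    have npos: "real n > 0" using n1 by simp
    have nd: "real n \<le> real d / 100"
    proof -
      have "real d * exp (- L / lg L) \<le> real d * (1/100)" using P2 dpos by (intro mult_left_mono) auto
      then show ?thesis using nle by simp
    qed
    have Delta_ge: "Delta d n \<ge> 2 * L^5"
    proof -
      have e: "exp (- L / lg L) * exp (L / lg L) = 1" by (simp add: exp_minus[symmetric] exp_add[symmetric])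
      have "real n * exp (L / lg L) \<le> real d * exp (- L / lg L) * exp (L / lg L)"
        using nle by (intro mult_right_mono) auto
      also have "\<dots> = real d" using e by (simp add: mult.assoc)
      finally have "exp (L / lg L) \<le> real d / real n" using npos by (simp add: le_divide_eq mult.commute)
      then show ?thesis using P1 unfolding Delta_def by simp
    qed
    define r where "r = Delta d n / lg d ^ 5"
    define c where "c = spar \<delta> d / lg d ^ 2"
    have L5pos: "L^5 > 0" using L4 by simp
    have r2: "r \<ge> 2"
      using Delta_ge L5pos unfolding r_def L_def[symmetric] by (simp add: le_divide_eq)
    have rDn: "r * real n = real d / L^5"
      unfolding r_def L_def[symmetric] Delta_def using npos by (simp add: field_simps)
    have c_eq: "c = real d powr (1 - \<delta> / 2)"
      unfolding c_def spar_def L_def[symmetric] using L4 by simp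
    have c_ge: "c \<ge> sqrt d"
    proof -
      have "sqrt d = real d powr (1/2)" using powr_half_sqrt[of "real d"] by simp
      also have "\<dots> \<le> real d powr (1 - \<delta> / 2)" using assms(2) P4 by (intro powr_mono) auto
      finally show ?thesis using c_eq by simp
    qed
    have sqrt_ge: "sqrt d \<ge> 6 * L" by (rule P3)
    have c1: "c \<ge> 1" using c_ge sqrt_ge L4 by linarith
    define H where "H = Hpar \<delta> d n"
    have H_eq: "H = (LEAST H. c * r ^ H \<ge> real d / 10)" unfolding H_def Hpar_def c_def r_def ..
    have sh_eq: "sh \<delta> d n j = (if j < H then c * r ^ j else real d / 10)" for j
      unfolding sh_def H_def c_def r_def ..
    have below: "c * r ^ j < real d / 10" if "j < H" for j
      using not_less_Least[of j "\<lambda>H. c * r ^ H \<ge> real d / 10"] that H_eq by simp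
    have exH: "c * r ^ d \<ge> real d / 10"
    proof -
      have "real d \<le> 2 ^ d"
      proof -
        have "d < 2 ^ d" by simp
        then have "real d < real (2 ^ d)" by (simp only: of_nat_less_iff)
        then show ?thesis by simp
      qed
      also have "(2::real) ^ d \<le> r ^ d" using r2 by (intro power_mono) auto
      also have "r ^ d \<le> c * r ^ d" using c1 r2 by simp
      finally show ?thesis by simp
    qed
    have atH: "c * r ^ H \<ge> real d / 10"
      unfolding H_eq by (rule LeastI[of "\<lambda>H. c * r ^ H \<ge> real d / 10", OF exH])
    have hH': "h < H" using hH H_def by simp
    define S where "S = sh \<delta> d n h"
    have S_eq: "S = c * r ^ h" unfolding S_def sh_eq using hH' by simp
    have rh1: "r ^ h \<ge> 1" using r2 by simp
    have S_ge: "S \<ge> sqrt d"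
    proof -
      have "c * 1 \<le> c * r ^ h" using rh1 c1 by (intro mult_left_mono) auto
      then show ?thesis using S_eq c_ge by simp
    qed
    have S0: "S \<ge> 0" using S_ge real_sqrt_ge_zero[of "real d"] by linarith
    have S_lt: "S < real d / 10" using below[OF hH'] S_eq by simp
    define S1 where "S1 = sh \<delta> d n (Suc h)"
    have S1_le: "S1 \<le> S * r \<and> S1 \<le> real d / 10 \<and> S1 \<ge> 0"
    proof (cases "Suc h < H")
      case True
      then have "S1 = c * r ^ Suc h" unfolding S1_def sh_eq by simp
      then show ?thesis using below[OF True] S_eq c1 r2 by (simp add: algebra_simps)
    next
      case False
      then have HS: "H = Suc h" using hH' by simp
      have "S1 = real d / 10" unfolding S1_def sh_eq using False by simp
      moreover have "real d / 10 \<le> S * r" using atH HS S_eq by (simp add: algebra_simps)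
      ultimately show ?thesis by simp
    qed
    define m where "m = nat \<lceil>S1\<rceil>"
    have m_le: "real m \<le> S1 + 1" unfolding m_def using S1_le nat_ceil_le by blast
    have sle_le: "real (sle_nat \<delta> d n h) \<le> 3 * S"
    proof -
      have "real (sle_nat \<delta> d n h) = (\<Sum>i\<in>{1..h}. real (nat \<lceil>sh \<delta> d n i\<rceil>))"
        unfolding sle_nat_def by simp
      also have "\<dots> \<le> (\<Sum>i\<in>{1..h}. c * r ^ i + 1)"
      proof (rule sum_mono)
        fix i assume "i \<in> {1..h}"
        then have "i < H" using hH' by simp
        then have "sh \<delta> d n i = c * r ^ i" unfolding sh_eq by simp
        moreover have "c * r ^ i \<ge> 0" using c1 r2 by simp
        ultimately show "real (nat \<lceil>sh \<delta> d n i\<rceil>) \<le> c * r ^ i + 1" using nat_ceil_le by simp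
      qed
      also have "\<dots> = c * (\<Sum>i\<in>{1..h}. r ^ i) + real h" by (simp add: sum.distrib sum_distrib_left)
      finally have A: "real (sle_nat \<delta> d n h) \<le> c * (\<Sum>i\<in>{1..h}. r ^ i) + real h" .
      have "(\<Sum>i\<in>{1..h}. r ^ i) \<le> (\<Sum>i\<le>h. r ^ i)"
        using r2 by (intro sum_mono2) auto
      also have "\<dots> \<le> 2 * r ^ h" by (rule geom_le[OF r2])
      finally have B: "c * (\<Sum>i\<in>{1..h}. r ^ i) \<le> c * (2 * r ^ h)" using c1 by (intro mult_left_mono) auto
      have "real h \<le> r ^ h"
      proof -
        have "h < 2 ^ h" by simp
        then have "real h < real (2 ^ h)" by (simp only: of_nat_less_iff)
        also have "real (2 ^ h) = (2::real) ^ h" by simp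
        also have "\<dots> \<le> r ^ h" using r2 by (intro power_mono) auto
        finally show ?thesis by simp
      qed
      also have "r ^ h \<le> c * r ^ h" using c1 r2 by simp
      finally have C: "real h \<le> c * r ^ h" .
      show ?thesis using A B C S_eq by simp
    qed
    have d2: "real (d div 2) = real d / 2" using ev by (auto elim: evenE)
    have sle_lt: "sle_nat \<delta> d n h \<le> d div 2"
    proof -
      have "real (sle_nat \<delta> d n h) \<le> real (d div 2)" using sle_le S_lt d2 by simp
      then show ?thesis by (simp only: of_nat_le_iff)
    qed
    define N0 where "N0 = card I"
    have N0r: "real N0 = real d / 2 - real (sle_nat \<delta> d n h)"
      unfolding N0_def cI using sle_lt d2 by (simp add: of_nat_diff)
    have N0_ge: "real N0 \<ge> real d / 5" using N0r sle_le S_lt by simp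
    have mn: "m + n \<le> N0" and mN0: "m < N0"
    proof -
      have "real m + real n \<le> real N0" using m_le S1_le nd N0_ge P4 by simp
      then show "m + n \<le> N0" by (simp only: of_nat_add[symmetric] of_nat_le_iff)
      have "real m < real N0" using m_le S1_le nd N0_ge P4 by simp
      then show "m < N0" by (simp only: of_nat_less_iff)
    qed
    have fI: "finite I" using Isub finite_subset by blast
    have fN: "finite N" and NO: "N \<subseteq> Oset d n (xi' d) out Vs (msg A) (A ` I)"
      using net unfolding largest_net_def separated_def by auto
    have "\<forall>x\<in>N. \<exists>U. U \<subseteq> I \<and> card U \<le> n \<and>
        (\<forall>R. R \<inter> U = {} \<longrightarrow> x \<in> Oset d n (xi' d) out Vs (msg A) (A ` (I - R)))"
    proof
      fix x assume "x \<in> N"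
      then have "x \<in> Oset d n (xi' d) out Vs (msg A) (A ` I)" using NO by blast
      then show "\<exists>U. U \<subseteq> I \<and> card U \<le> n \<and>
        (\<forall>R. R \<inter> U = {} \<longrightarrow> x \<in> Oset d n (xi' d) out Vs (msg A) (A ` (I - R)))" by (rule survive)
    qed
    from bchoice[OF this] obtain U where U: "\<forall>x\<in>N. U x \<subseteq> I \<and> card (U x) \<le> n \<and>
        (\<forall>R. R \<inter> U x = {} \<longrightarrow> x \<in> Oset d n (xi' d) out Vs (msg A) (A ` (I - R)))" ..
    obtain R where RI: "R \<subseteq> I" and cR: "card R = m"
      and cnt: "card N * ((N0 - n) choose m) \<le> card {x\<in>N. R \<inter> U x = {}} * (N0 choose m)"
      using exists_good_subset[OF fI fN, of U n m] U mN0 unfolding N0_def by auto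
    define surv where "surv = {x\<in>N. R \<inter> U x = {}}"
    have surv_sub: "surv \<subseteq> Oset d n (xi' d) out Vs (msg A) (A ` (I - R)) \<inter> N"
      unfolding surv_def using U by auto
    have card_surv: "card surv \<le> card (Oset d n (xi' d) out Vs (msg A) (A ` (I - R)) \<inter> N)"
      using surv_sub fN by (intro card_mono) auto
    define x where "x = real n / (real N0 - real m)"
    define q where "q = 1 - x"
    have Nm: "real N0 - real m \<ge> real d / 20" using N0_ge m_le S1_le P4 by simp
    have x0: "x \<ge> 0" unfolding x_def using Nm dpos by simp
    have xh: "x \<le> 1/2"
    proof -
      have "real n * 2 \<le> real N0 - real m" using nd Nm by simp
      then show ?thesis unfolding x_def using Nm dpos by (simp add: divide_le_eq)
    qed
    have ratio: "real (N0 choose m) * q ^ m \<le> real ((N0 - n) choose m)"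
      unfolding q_def x_def using choose_ratio[of m n N0 m] mn mN0 by simp
    have Cpos: "real (N0 choose m) > 0" using mN0 by simp
    have main1: "real (card N) * q ^ m \<le> real (card surv)"
    proof -
      have "real (card N) * q ^ m * real (N0 choose m) \<le> real (card N) * real ((N0 - n) choose m)"
        using ratio by (simp add: mult_left_mono mult.commute mult.left_commute)
      also have "\<dots> \<le> real (card surv) * real (N0 choose m)"
        using cnt unfolding surv_def by (simp only: of_nat_mult[symmetric] of_nat_le_iff)
      finally show ?thesis using Cpos by simp
    qed
    have qm: "q ^ m \<ge> exp (- 2 * real m * x)"
    proof -
      have lnq: "ln q \<ge> - 2 * x"
      proof -
        have "- x - 2 * x\<^sup>2 \<le> ln q" unfolding q_def by (rule ln_one_minus_pos_lower_bound[OF x0 xh])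
        moreover have "2 * x\<^sup>2 \<le> x"
        proof -
          have "x * (2 * x) \<le> x * 1" using x0 xh by (intro mult_left_mono) auto
          then show ?thesis by (simp add: power2_eq_square algebra_simps)
        qed
        ultimately show ?thesis by simp
      qed
      have qpos: "q > 0" unfolding q_def using xh by simp
      have "q ^ m = exp (real m * ln q)" using qpos by (simp add: exp_of_nat_mult)
      moreover have "real m * ln q \<ge> - 2 * real m * x" using lnq
        by (metis mult.assoc mult.left_commute mult_left_mono of_nat_0_le_iff mult_minus_left)
      ultimately show ?thesis by simp
    qed
    have key: "2 * real m * x \<le> ln 2 * (S / (2 * L))"
    proof -
      have ln2: "ln (2::real) \<ge> 1/2"
      proof -
        have "ln (1/2::real) \<le> 1/2 - 1" by (rule ln_le_minus_one) simp
        then show ?thesis by (simp add: ln_div)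
      qed
      have "2 * real m * x = 2 * (real m * real n) / (real N0 - real m)" unfolding x_def by simp
      also have "\<dots> \<le> 2 * (real m * real n) / (real d / 20)"
        using Nm dpos npos by (intro divide_left_mono) auto
      also have "\<dots> = 40 * (real m * real n) / real d" by simp
      also have "real m * real n \<le> (S * r + 1) * real n"
        using m_le S1_le npos by (intro mult_right_mono) auto
      also have "(S * r + 1) * real n = S * real d / L^5 + real n" using rDn by (simp add: algebra_simps)
      finally have A: "2 * real m * x \<le> 40 * (S * real d / L ^ 5 + real n) / real d"
        using dpos by (simp add: divide_right_mono)
      also have "\<dots> = 40 * S / L^5 + 40 * real n / real d" using dpos by (simp add: field_simps)
      also have "40 * real n / real d \<le> 2/5" using nd dpos by (simp add: divide_le_eq)
      also have "40 * S / L^5 \<le> 40 * S / (256 * L)"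
      proof -
        have "L^4 \<ge> 4^4" using L4 by (intro power_mono) auto
        then have "L * 256 \<le> L * L^4" using L4 by (intro mult_left_mono) auto
        moreover have "L ^ 5 = L * L ^ 4" by (simp add: eval_nat_numeral)
        ultimately have "256 * L \<le> L^5" by (simp add: mult.commute)
        moreover have "S \<ge> 0" using S_ge real_sqrt_ge_zero[of "real d"] by linarith
        ultimately show ?thesis using L4 by (intro divide_left_mono) auto
      qed
      also have "40 * S / (256 * L) + 2/5 \<le> S / (4 * L)"
      proof -
        have "S \<ge> 6 * L" using S_ge sqrt_ge by simp
        then show ?thesis using L4 by (simp add: field_simps)
      qed
      also have "S / (4 * L) \<le> ln 2 * (S / (2 * L))"
      proof -
        have "S / (2 * L) \<ge> 0" using S0 L4 by simp
        then have "1/2 * (S / (2 * L)) \<le> ln 2 * (S / (2 * L))" using ln2 by (intro mult_right_mono) auto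
        then show ?thesis by simp
      qed
      finally show ?thesis by simp
    qed
    have final: "real (card surv) \<ge> 2 powr (S / (2 * L))"
    proof -
      have "2 powr (S / (2 * L)) = 2 powr (S / L) * exp (- (ln 2 * (S / (2 * L))))"
        by (simp add: powr_def exp_add[symmetric] exp_minus field_simps)
      also have "\<dots> \<le> real (card N) * exp (- 2 * real m * x)"
        using cN key unfolding S_def[symmetric] by (intro mult_mono) auto
      also have "\<dots> \<le> real (card N) * q ^ m" using qm by (intro mult_left_mono) auto
      also have "\<dots> \<le> real (card surv)" by (rule main1)
      finally show ?thesis .
    qed
    show "\<exists>R. R \<subseteq> I \<and> card R = nat \<lceil>sh \<delta> d n (Suc h)\<rceil> \<and>
            real (card (Oset d n (xi' d) out Vs (msg A) (A ` (I - R)) \<inter> N))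
              \<ge> 2 powr (sh \<delta> d n h / (2 * lg d))"
    proof (intro exI conjI)
      show "R \<subseteq> I" by (rule RI)
      show "card R = nat \<lceil>sh \<delta> d n (Suc h)\<rceil>" using cR unfolding m_def S1_def .
      show "real (card (Oset d n (xi' d) out Vs (msg A) (A ` (I - R)) \<inter> N)) \<ge> 2 powr (sh \<delta> d n h / (2 * lg d))"
        using final card_surv unfolding S_def L_def by (meson of_nat_le_iff order_trans)
    qed
  qed
qed

end
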